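(* Under the assumptions of the previous lemma (semi-simple $\tau$, one-point cycles $x_a,x_b$ of $f_\tau(x)=\lambda$), $$\big(I^{(0)}_a(\tau,\lambda),I^{(0)}_b(\tau,\lambda)\big)=\begin{cases}-\partial_\lambda\log(x_a-x_b),&a\ne b,\\ \partial_\lambda\log\big(f'_\tau(x_a)\big),&a=b.\end{cases}$$
   Context: Setup: fix integers $k,m\ge1$, $N=k+m$, $Q\in\mathbb{C}^*$. $M$ is the space of Laurent polynomials $f_t(x)=x^k+\sum_{i=1}^kt_ix^{k-i}+\sum_{j=1}^{m-1}t_{k+j}(Qe^{t_N}/x)^j+(Qe^{t_N}/x)^m$, $\omega=dx/x$, flat coordinates $\tau_1,\dots,\tau_N$ ($\tau_i=-\frac ki\mathrm{Res}_{x=\infty}f^{i/k}\omega$ for $1\le i\le k-1$, $\tau_{k+m-j}=\frac mj\mathrm{Res}_{x=0}f^{j/m}\omega$ for $1\le j\le m-1$, $\tau_k=t_k$, $\tau_N=mt_N$), $\partial_i=\partial/\partial\tau_i$, $f_\tau$ the corresponding Laurent polynomial, residue pairing $(\partial,\partial')=-(\mathrm{Res}_{x=0}+\mathrm{Res}_{x=\infty})\frac{(\partial f\omega)(\partial'f\omega)}{df}$ (identifying vectors and covectors). $\tau$ is semi-simple if $f_\tau$ has $N$ non-degenerate critical points whose critical values form local coordinates near $\tau$. A one-point cycle $x_a(\tau,\lambda)$ is a solution of $f_\tau(x)=\lambda$ varying analytically, and $(I^{(0)}_a(\tau,\lambda),\partial_i)=-\partial_i\log x_a(\tau,\lambda)$;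 $'$ denotes $\partial/\partial x$. *)

theory Defs
  imports "HOL-Complex_Analysis.Complex_Analysis"
begin

text \<open>Points of C^N are represented as functions nat => complex; only the
coordinates 1..N are relevant.\<close>

definition fL :: "nat \<Rightarrow> nat \<Rightarrow> complex \<Rightarrow> (nat \<Rightarrow> complex) \<Rightarrow> complex \<Rightarrow> complex" where
  "fL k m Q t x =
     x ^ k + (\<Sum>i = 1..k. t i * x ^ (k - i))
     + (\<Sum>j = 1..m - 1. t (k + j) * (Q * exp (t (k + m)) / x) ^ j)
     + (Q * exp (t (k + m)) / x) ^ m"

definition res_inf :: "(complex \<Rightarrow> complex) \<Rightarrow> complex" where
  "res_inf g = - residue (\<lambda>w. g (1 / w) / w ^ 2) 0"

text \<open>Flat coordinates tau_n(t), n = 1..k+m.  Branches: f^(1/k) = x (f/x^k)^(1/k)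
near infinity and f^(1/m) = (q/x) (f x^m / q^m)^(1/m) near 0 (q = Q e^(t_N)),
principal powers.\<close>
definition flat :: "nat \<Rightarrow> nat \<Rightarrow> complex \<Rightarrow> (nat \<Rightarrow> complex) \<Rightarrow> nat \<Rightarrow> complex" where
  "flat k m Q t n =
    (if 1 \<le> n \<and> n \<le> k - 1 then
       - (of_nat k / of_nat n) *
         res_inf (\<lambda>x. x ^ n * (fL k m Q t x / x ^ k) powr (of_nat n / of_nat k) / x)
     else if n = k then t k
     else if k + 1 \<le> n \<and> n \<le> k + m - 1 then
       (let j = k + m - n; q = Q * exp (t (k + m)) in
        (of_nat m / of_nat j) *
          residue (\<lambda>x. (q / x) ^ j * (fL k m Q t x * x ^ m / q ^ m) powr (of_nat j / of_nat m) / x) 0)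
     else if n = k + m then of_nat m * t (k + m)
     else 0)"

definition polydisc :: "nat \<Rightarrow> (nat \<Rightarrow> complex) \<Rightarrow> real \<Rightarrow> (nat \<Rightarrow> complex) set" where
  "polydisc N c r = {z. \<forall>i\<in>{1..N}. cmod (z i - c i) < r}"

definition pd :: "nat \<Rightarrow> ((nat \<Rightarrow> complex) \<Rightarrow> complex) \<Rightarrow> (nat \<Rightarrow> complex) \<Rightarrow> complex" where
  "pd i G z = deriv (\<lambda>w. G (z(i := w))) (z i)"

text \<open>Holomorphic functions of N variables on a polydisc (Osgood: continuous and
holomorphic in each variable separately).\<close>
definition holo :: "nat \<Rightarrow> (nat \<Rightarrow> complex) set \<Rightarrow> ((nat \<Rightarrow> complex) \<Rightarrow> complex) \<Rightarrow> bool" where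
  "holo N U G \<longleftrightarrow>
     (\<forall>z\<in>U. \<forall>i\<in>{1..N}. (\<lambda>w. G (z(i := w))) field_differentiable at (z i)) \<and>
     (\<forall>z\<in>U. \<forall>e>0. \<exists>d>0. \<forall>z'\<in>U. (\<forall>i\<in>{1..N}. cmod (z' i - z i) < d) \<longrightarrow> cmod (G z' - G z) < e)"

definition holo2 :: "nat \<Rightarrow> (nat \<Rightarrow> complex) set \<Rightarrow> complex set \<Rightarrow>
    ((nat \<Rightarrow> complex) \<Rightarrow> complex \<Rightarrow> complex) \<Rightarrow> bool" where
  "holo2 N U L G \<longleftrightarrow>
     (\<forall>z\<in>U. \<forall>l\<in>L. \<forall>i\<in>{1..N}. (\<lambda>w. G (z(i := w)) l) field_differentiable at (z i)) \<and>
     (\<forall>z\<in>U. \<forall>l\<in>L. G z field_differentiable at l) \<and>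
     (\<forall>z\<in>U. \<forall>l\<in>L. \<forall>e>0. \<exists>d>0. \<forall>z'\<in>U. \<forall>l'\<in>L.
        (\<forall>i\<in>{1..N}. cmod (z' i - z i) < d) \<and> cmod (l' - l) < d \<longrightarrow> cmod (G z' l' - G z l) < e)"

text \<open>Semi-simplicity of tau0 for a family F tau x = f_tau(x): f_tau has N distinct
non-degenerate critical points (in C^*), varying holomorphically near tau0, whose
critical values u_i form local coordinates near tau0 (non-singular Jacobian).\<close>
definition semisimple :: "nat \<Rightarrow> ((nat \<Rightarrow> complex) \<Rightarrow> complex \<Rightarrow> complex) \<Rightarrow> (nat \<Rightarrow> complex) \<Rightarrow> bool" where
  "semisimple N F tau0 \<longleftrightarrow>
    (\<exists>r>0. \<exists>c :: nat \<Rightarrow> (nat \<Rightarrow> complex) \<Rightarrow> complex.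
       (\<forall>i\<in>{1..N}. holo N (polydisc N tau0 r) (c i)) \<and>
       (\<forall>z\<in>polydisc N tau0 r. \<forall>i\<in>{1..N}.
           c i z \<noteq> 0 \<and> deriv (F z) (c i z) = 0 \<and> deriv (deriv (F z)) (c i z) \<noteq> 0) \<and>
       (\<forall>z\<in>polydisc N tau0 r. inj_on (\<lambda>i. c i z) {1..N}) \<and>
       (\<forall>v :: nat \<Rightarrow> complex.
          (\<forall>i\<in>{1..N}. (\<Sum>j = 1..N. pd j (\<lambda>z. F z (c i z)) tau0 * v j) = 0)
          \<longrightarrow> (\<forall>j\<in>{1..N}. v j = 0)))"

definition one_point_cycle :: "nat \<Rightarrow> ((nat \<Rightarrow> complex) \<Rightarrow> complex \<Rightarrow> complex) \<Rightarrow> (nat \<Rightarrow> complex) \<Rightarrow>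
    complex \<Rightarrow> ((nat \<Rightarrow> complex) \<Rightarrow> complex \<Rightarrow> complex) \<Rightarrow> bool" where
  "one_point_cycle N F tau0 lam0 X \<longleftrightarrow>
    (\<exists>r>0. holo2 N (polydisc N tau0 r) (ball lam0 r) X \<and>
       (\<forall>z\<in>polydisc N tau0 r. \<forall>l\<in>ball lam0 r. X z l \<noteq> 0 \<and> F z (X z l) = l))"

text \<open>Residue pairing of two vectors whose derivatives of f are A and B (as functions of x).\<close>
definition res_pair :: "(complex \<Rightarrow> complex) \<Rightarrow> (complex \<Rightarrow> complex) \<Rightarrow> (complex \<Rightarrow> complex) \<Rightarrow> complex" where
  "res_pair f A B =
     (let g = (\<lambda>x. A x * B x / (x ^ 2 * deriv f x)) in - (residue g 0 + res_inf g))"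

definition eta :: "((nat \<Rightarrow> complex) \<Rightarrow> complex \<Rightarrow> complex) \<Rightarrow> (nat \<Rightarrow> complex) \<Rightarrow> nat \<Rightarrow> nat \<Rightarrow> complex" where
  "eta F tau i j = res_pair (F tau) (\<lambda>x. pd i (\<lambda>z. F z x) tau) (\<lambda>x. pd j (\<lambda>z. F z x) tau)"

end

theory Submission
  imports Defs "Jordan_Normal_Form.Determinant"
begin

definition laurentV :: "nat \<Rightarrow> nat \<Rightarrow> (nat \<Rightarrow> complex) \<Rightarrow> (nat \<Rightarrow> complex) \<Rightarrow> complex \<Rightarrow> complex" where
  "laurentV k m a b x = (\<Sum>i=1..k. a i * x ^ (k - i)) + (\<Sum>j=1..m. b j * inverse x ^ j)"

definition laurentVx :: "nat \<Rightarrow> nat \<Rightarrow> (nat \<Rightarrow> complex) \<Rightarrow> (nat \<Rightarrow> complex) \<Rightarrow> complex \<Rightarrow> complex" where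
  "laurentVx k m a b x = (\<Sum>i=1..k. a i * of_nat (k - i) * x ^ (k - i - 1))
      - (\<Sum>j=1..m. b j * of_nat j * inverse x ^ Suc j)"

lemma laurentV_deriv:
  assumes da: "\<And>i. i \<in> {1..k} \<Longrightarrow> ((\<lambda>w. a w i) has_field_derivative da i) (at w0)"
    and db: "\<And>j. j \<in> {1..m} \<Longrightarrow> ((\<lambda>w. b w j) has_field_derivative db j) (at w0)"
    and dX: "(X has_field_derivative dX) (at w0)" and X0: "X w0 \<noteq> 0"
  shows "((\<lambda>w. laurentV k m (a w) (b w) (X w)) has_field_derivative
           (laurentV k m da db (X w0) + dX * laurentVx k m (a w0) (b w0) (X w0))) (at w0)"
proof -
  have 1: "((\<lambda>w. a w i * X w ^ (k - i)) has_field_derivative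
      (da i * X w0 ^ (k - i) + dX * (a w0 i * of_nat (k - i) * X w0 ^ (k - i - 1)))) (at w0)"
    if "i \<in> {1..k}" for i
    using da[OF that] dX
    by (auto intro!: derivative_eq_intros simp: algebra_simps)
  have 2: "((\<lambda>w. b w j * inverse (X w) ^ j) has_field_derivative
      (db j * inverse (X w0) ^ j - dX * (b w0 j * of_nat j * inverse (X w0) ^ Suc j))) (at w0)"
    if j: "j \<in> {1..m}" for j
  proof -
    have "((\<lambda>w. b w j * inverse (X w) ^ j) has_field_derivative
       (db j * inverse (X w0) ^ j + b w0 j * (of_nat j * (- (inverse (X w0) * dX * inverse (X w0)) * inverse (X w0) ^ (j - 1))))) (at w0)"
      using db[OF j] dX X0 by (auto intro!: derivative_eq_intros)
    moreover have "inverse (X w0) * inverse (X w0) ^ (j - 1) = inverse (X w0) ^ j"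
      using j by (cases j) auto
    ultimately show ?thesis
      by (simp add: algebra_simps) (metis (no_types, lifting) mult.assoc mult.left_commute power_Suc)
  qed
  have "((\<lambda>w. laurentV k m (a w) (b w) (X w)) has_field_derivative
      ((\<Sum>i=1..k. da i * X w0 ^ (k - i) + dX * (a w0 i * of_nat (k - i) * X w0 ^ (k - i - 1)))
       + (\<Sum>j=1..m. db j * inverse (X w0) ^ j - dX * (b w0 j * of_nat j * inverse (X w0) ^ Suc j)))) (at w0)"
    unfolding laurentV_def
    by (intro DERIV_add DERIV_sum 1 2) (auto simp: power_inverse)
  then show ?thesis
    by (simp add: laurentV_def laurentVx_def sum.distrib sum_subtractf sum_distrib_left algebra_simps)
qed

definition Pi_poly :: "(nat \<Rightarrow> complex) \<Rightarrow> nat set \<Rightarrow> complex poly" where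
  "Pi_poly p A = (\<Prod>t\<in>A. [:- p t, 1:])"

lemma poly_Pi_poly: "poly (Pi_poly p A) x = (\<Prod>t\<in>A. x - p t)"
  by (simp add: Pi_poly_def poly_prod)

lemma degree_Pi_poly: "finite A \<Longrightarrow> Polynomial.degree (Pi_poly p A) = card A"
  unfolding Pi_poly_def by (subst degree_prod_sum_eq) auto

lemma lead_Pi_poly: "finite A \<Longrightarrow> Polynomial.coeff (Pi_poly p A) (card A) = 1"
  using lead_coeff_prod[of "\<lambda>t. [:- p t, 1:]" A] degree_Pi_poly[of A p]
  by (simp add: Pi_poly_def)

lemma lagrange:
  fixes p :: "nat \<Rightarrow> complex" and u :: "complex poly"
  assumes inj: "inj_on p {1..N}" and deg: "Polynomial.degree u < N"
  shows "poly u x = (\<Sum>s=1..N. poly u (p s) / (\<Prod>t\<in>{1..N}-{s}. p s - p t) * (\<Prod>t\<in>{1..N}-{s}. x - p t))"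
proof -
  define L where "L = (\<Sum>s=1..N. Polynomial.smult (poly u (p s) / (\<Prod>t\<in>{1..N}-{s}. p s - p t)) (Pi_poly p ({1..N}-{s})))"
  have degL: "Polynomial.degree L \<le> N - 1"
    unfolding L_def
  proof (intro degree_sum_le)
    fix s assume s: "s \<in> {1..N}"
    have "Polynomial.degree (Polynomial.smult (poly u (p s) / (\<Prod>t\<in>{1..N}-{s}. p s - p t)) (Pi_poly p ({1..N}-{s})))
        \<le> Polynomial.degree (Pi_poly p ({1..N}-{s}))" by (rule degree_smult_le)
    also have "\<dots> = N - 1" using s by (simp add: degree_Pi_poly)
    finally show "Polynomial.degree (Polynomial.smult (poly u (p s) / (\<Prod>t\<in>{1..N}-{s}. p s - p t)) (Pi_poly p ({1..N}-{s}))) \<le> N - 1" .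
  qed simp
  have ev: "poly L (p r) = poly u (p r)" if r: "r \<in> {1..N}" for r
  proof -
    have "poly L (p r) = (\<Sum>s=1..N. poly u (p s) / (\<Prod>t\<in>{1..N}-{s}. p s - p t) * (\<Prod>t\<in>{1..N}-{s}. p r - p t))"
      by (simp add: L_def poly_sum poly_Pi_poly)
    also have "\<dots> = (\<Sum>s\<in>{r}. poly u (p s) / (\<Prod>t\<in>{1..N}-{s}. p s - p t) * (\<Prod>t\<in>{1..N}-{s}. p r - p t))"
    proof (rule sum.mono_neutral_right)
      show "\<forall>i\<in>{1..N} - {r}. poly u (p i) / (\<Prod>t\<in>{1..N}-{i}. p i - p t) * (\<Prod>t\<in>{1..N}-{i}. p r - p t) = 0"
      proof
        fix i assume i: "i \<in> {1..N} - {r}"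
        have "(\<Prod>t\<in>{1..N}-{i}. p r - p t) = 0"
          by (rule prod_zero) (use r i in auto)
        then show "poly u (p i) / (\<Prod>t\<in>{1..N}-{i}. p i - p t) * (\<Prod>t\<in>{1..N}-{i}. p r - p t) = 0" by simp
      qed
    qed (use r in simp_all)
    also have "\<dots> = poly u (p r)"
    proof -
      have "\<forall>t\<in>{1..N}-{r}. p r - p t \<noteq> 0"
      proof
        fix t assume t: "t \<in> {1..N}-{r}"
        then have "p r \<noteq> p t" using inj r unfolding inj_on_def by blast
        then show "p r - p t \<noteq> 0" by simp
      qed
      then have "(\<Prod>t\<in>{1..N}-{r}. p r - p t) \<noteq> 0"
        by (subst prod_zero_iff) auto
      then show ?thesis by simp
    qed
    finally show ?thesis .
  qed
  have cardA: "card (p ` {1..N}) = N" using inj by (simp add: card_image)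
  have "u = L"
  proof (rule poly_eqI_degree[of "p ` {1..N}"])
    show "\<And>x. x \<in> p ` {1..N} \<Longrightarrow> poly u x = poly L x" using ev by auto
    show "Polynomial.degree u < card (p ` {1..N})" using deg cardA by simp
    show "Polynomial.degree L < card (p ` {1..N})" using degL cardA deg by simp
  qed
  then have "poly u x = poly L x" by simp
  also have "\<dots> = (\<Sum>s=1..N. poly u (p s) / (\<Prod>t\<in>{1..N}-{s}. p s - p t) * (\<Prod>t\<in>{1..N}-{s}. x - p t))"
    unfolding L_def poly_sum poly_smult poly_Pi_poly ..
  finally show ?thesis .
qed

lemma lagrange_div:
  fixes p :: "nat \<Rightarrow> complex" and u :: "complex poly"
  assumes inj: "inj_on p {1..N}" and deg: "Polynomial.degree u < N" and x: "x \<notin> p ` {1..N}"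
  shows "poly u x / (\<Prod>t=1..N. x - p t) = (\<Sum>s=1..N. poly u (p s) / ((\<Prod>t\<in>{1..N}-{s}. p s - p t) * (x - p s)))"
proof -
  have nz: "(\<Prod>t=1..N. x - p t) \<noteq> 0" using x by auto
  have "poly u x / (\<Prod>t=1..N. x - p t) = (\<Sum>s=1..N. poly u (p s) / (\<Prod>t\<in>{1..N}-{s}. p s - p t) * (\<Prod>t\<in>{1..N}-{s}. x - p t) / (\<Prod>t=1..N. x - p t))"
    by (subst lagrange[OF inj deg]) (simp add: sum_divide_distrib)
  also have "\<dots> = (\<Sum>s=1..N. poly u (p s) / ((\<Prod>t\<in>{1..N}-{s}. p s - p t) * (x - p s)))"
  proof (rule sum.cong[OF refl])
    fix s assume s: "s \<in> {1..N}"
    have e: "(\<Prod>t=1..N. x - p t) = (x - p s) * (\<Prod>t\<in>{1..N}-{s}. x - p t)"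
      using s by (simp only: prod.remove[of "{1..N}" s] finite_atLeastAtMost)
    have A: "(\<Prod>t\<in>{1..N}-{s}. x - p t) \<noteq> 0" using x by auto
    have aux: "\<And>b A y :: complex. A \<noteq> 0 \<Longrightarrow> b * A / (y * A) = b / y" by simp
    show "poly u (p s) / (\<Prod>t\<in>{1..N}-{s}. p s - p t) * (\<Prod>t\<in>{1..N}-{s}. x - p t) / (\<Prod>t=1..N. x - p t)
      = poly u (p s) / ((\<Prod>t\<in>{1..N}-{s}. p s - p t) * (x - p s))"
      unfolding e aux[OF A] by (simp add: divide_divide_eq_left)
  qed
  finally show ?thesis .
qed

lemma sum_shift1: "(\<Sum>j=1..N. f j) = (\<Sum>j<N. f (Suc j))"
  by (simp add: sum_bounds_lt_plus1)

lemma transpose_inj: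
  fixes M :: "nat \<Rightarrow> nat \<Rightarrow> complex" and N :: nat
  assumes inj: "\<forall>v. (\<forall>i\<in>{1..N}. (\<Sum>j=1..N. M i j * v j) = 0) \<longrightarrow> (\<forall>j\<in>{1..N}. v j = 0)"
    and y: "\<forall>j\<in>{1..N}. (\<Sum>i=1..N. y i * M i j) = 0"
  shows "\<forall>i\<in>{1..N}. y i = 0"
proof -
  define A where "A = mat N N (\<lambda>(i,j). M (Suc i) (Suc j))"
  have A: "A \<in> carrier_mat N N" by (simp add: A_def)
  have "det A \<noteq> 0"
  proof
    assume "det A = 0"
    then obtain v where v: "v \<in> carrier_vec N" "v \<noteq> 0\<^sub>v N" "A *\<^sub>v v = 0\<^sub>v N"
      using det_0_iff_vec_prod_zero[OF A] by auto
    define w where "w j = v $ (j - 1)" for j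
    have "\<forall>i\<in>{1..N}. (\<Sum>j=1..N. M i j * w j) = 0"
    proof
      fix i assume i: "i \<in> {1..N}"
      have "(A *\<^sub>v v) $ (i - 1) = 0" using v i by auto
      moreover have "(A *\<^sub>v v) $ (i - 1) = (\<Sum>j<N. M i (Suc j) * v $ j)"
        using i v(1) by (auto simp: A_def scalar_prod_def atLeast0LessThan intro!: sum.cong)
      ultimately show "(\<Sum>j=1..N. M i j * w j) = 0" unfolding sum_shift1 w_def by simp
    qed
    then have "\<forall>j\<in>{1..N}. w j = 0" using inj by blast
    then have "v = 0\<^sub>v N"
      using v(1) by (intro eq_vecI) (auto simp: w_def dest!: bspec[of _ _ "Suc _"])
    with v show False by simp
  qed
  then have dT: "det (transpose_mat A) \<noteq> 0" using det_transpose[OF A] by simp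
  define u where "u = vec N (\<lambda>i. y (Suc i))"
  have "transpose_mat A *\<^sub>v u = 0\<^sub>v N"
  proof (intro eq_vecI)
    fix j assume j: "j < dim_vec (0\<^sub>v N :: complex vec)"
    have "(transpose_mat A *\<^sub>v u) $ j = (\<Sum>i<N. y (Suc i) * M (Suc i) (Suc j))"
      using j by (auto simp: A_def u_def scalar_prod_def atLeast0LessThan mult.commute intro!: sum.cong)
    also have "\<dots> = (\<Sum>i=1..N. y i * M i (Suc j))" unfolding sum_shift1 by simp
    also have "\<dots> = 0" using y j by auto
    finally show "(transpose_mat A *\<^sub>v u) $ j = 0\<^sub>v N $ j" using j by simp
  qed (simp add: A_def)
  moreover have "u \<in> carrier_vec N" by (simp add: u_def)
  moreover have "transpose_mat A \<in> carrier_mat N N" using A by simp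
  ultimately have "u = 0\<^sub>v N"
    using det_0_iff_vec_prod_zero[of "transpose_mat A" N] dT by blast
  then show ?thesis
    by (auto simp: u_def) (metis One_nat_def Suc_pred atLeastAtMost_iff index_vec index_zero_vec(1) le_simps(3) not_less_eq_eq)
qed

definition Bt :: "nat \<Rightarrow> nat \<Rightarrow> complex \<Rightarrow> (nat \<Rightarrow> complex) \<Rightarrow> nat \<Rightarrow> complex" where
  "Bt k m Q t j = (if j < m then t (k + j) else 1) * (Q * exp (t (k + m))) ^ j"

definition dBt :: "nat \<Rightarrow> nat \<Rightarrow> complex \<Rightarrow> (nat \<Rightarrow> complex) \<Rightarrow> (nat \<Rightarrow> complex) \<Rightarrow> nat \<Rightarrow> complex" where
  "dBt k m Q t dt j = (if j < m then dt (k + j) else 0) * (Q * exp (t (k + m))) ^ j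
     + (if j < m then t (k + j) else 1) * of_nat j * (Q * exp (t (k + m))) ^ j * dt (k + m)"

definition fLx :: "nat \<Rightarrow> nat \<Rightarrow> complex \<Rightarrow> (nat \<Rightarrow> complex) \<Rightarrow> complex \<Rightarrow> complex" where
  "fLx k m Q t x = of_nat k * x ^ (k - 1) + laurentVx k m t (Bt k m Q t) x"

lemma fL_eq:
  assumes "m \<ge> 1"
  shows "fL k m Q t x = x ^ k + laurentV k m t (Bt k m Q t) x"
proof -
  obtain m' where m: "m = Suc m'" using assms by (cases m) auto
  have m1: "m - 1 = m'" using m by simp
  have e: "(Q * exp (t (k + m)) / x) ^ j = (Q * exp (t (k + m))) ^ j * inverse x ^ j" for j
    by (simp add: divide_inverse power_mult_distrib power_inverse)
  have "(\<Sum>j=1..m. Bt k m Q t j * inverse x ^ j)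
      = (\<Sum>j=1..m'. Bt k m Q t j * inverse x ^ j) + Bt k m Q t m * inverse x ^ m"
    unfolding m by (simp add: sum.cl_ivl_Suc)
  also have "(\<Sum>j=1..m'. Bt k m Q t j * inverse x ^ j) = (\<Sum>j=1..m'. t (k + j) * (Q * exp (t (k + m)) / x) ^ j)"
  proof (rule sum.cong[OF refl])
    fix j assume "j \<in> {1..m'}"
    then have "j < m" using m by simp
    then have "Bt k m Q t j = t (k + j) * (Q * exp (t (k + m))) ^ j" by (simp add: Bt_def)
    then show "Bt k m Q t j * inverse x ^ j = t (k + j) * (Q * exp (t (k + m)) / x) ^ j"
      by (simp only: mult.assoc e)
  qed
  also have "Bt k m Q t m * inverse x ^ m = (Q * exp (t (k + m)) / x) ^ m"
    by (simp add: Bt_def e)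
  finally show ?thesis
    unfolding fL_def laurentV_def m1 by (simp add: algebra_simps)
qed

lemma fL_chain:
  assumes m: "m \<ge> 1"
    and dt: "\<And>l. l \<in> {1..k+m} \<Longrightarrow> ((\<lambda>w. tt w l) has_field_derivative dt l) (at w0)"
    and dX: "(X has_field_derivative dX) (at w0)" and X0: "X w0 \<noteq> 0"
  shows "((\<lambda>w. fL k m Q (tt w) (X w)) has_field_derivative
           (laurentV k m dt (dBt k m Q (tt w0) dt) (X w0) + dX * fLx k m Q (tt w0) (X w0))) (at w0)"
proof -
  have dB: "((\<lambda>w. Bt k m Q (tt w) j) has_field_derivative dBt k m Q (tt w0) dt j) (at w0)"
    if j: "j \<in> {1..m}" for j
  proof -
    have dN: "((\<lambda>w. tt w (k + m)) has_field_derivative dt (k + m)) (at w0)" using dt m by auto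
    define q0 where "q0 = Q * exp (tt w0 (k + m))"
    have pw: "Q * (exp (tt w0 (k + m)) * dt (k + m)) * q0 ^ (j - Suc 0) = q0 ^ j * dt (k + m)"
    proof -
      have "Q * (exp (tt w0 (k + m)) * dt (k + m)) * q0 ^ (j - Suc 0) = (q0 ^ (j - Suc 0) * q0) * dt (k + m)"
        by (simp add: q0_def mult_ac)
      also have "q0 ^ (j - Suc 0) * q0 = q0 ^ j" using j by (cases j) (auto simp: mult.commute)
      finally show ?thesis .
    qed
    show ?thesis
    proof (cases "j < m")
      case True
      have dj: "((\<lambda>w. tt w (k + j)) has_field_derivative dt (k + j)) (at w0)" using dt j True by auto
      have "((\<lambda>w. tt w (k + j) * (Q * exp (tt w (k + m))) ^ j) has_field_derivative
         dt (k + j) * q0 ^ j + tt w0 (k + j) * (of_nat j * (Q * (exp (tt w0 (k + m)) * dt (k + m))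
           * q0 ^ (j - Suc 0)))) (at w0)"
        unfolding q0_def by (auto intro!: derivative_eq_intros dj dN)
      moreover have "dt (k + j) * q0 ^ j + tt w0 (k + j) * (of_nat j * (Q * (exp (tt w0 (k + m)) * dt (k + m))
           * q0 ^ (j - Suc 0))) = dBt k m Q (tt w0) dt j"
        unfolding pw using True by (simp add: dBt_def q0_def[symmetric] mult_ac)
      ultimately show ?thesis using True by (simp add: Bt_def)
    next
      case False
      have "((\<lambda>w. (Q * exp (tt w (k + m))) ^ j) has_field_derivative
         (of_nat j * (Q * (exp (tt w0 (k + m)) * dt (k + m))
           * q0 ^ (j - Suc 0)))) (at w0)"
        unfolding q0_def by (auto intro!: derivative_eq_intros dN)
      moreover have "of_nat j * (Q * (exp (tt w0 (k + m)) * dt (k + m))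
           * q0 ^ (j - Suc 0)) = dBt k m Q (tt w0) dt j"
        unfolding pw using False by (simp add: dBt_def q0_def[symmetric] mult_ac)
      ultimately show ?thesis using False by (simp add: Bt_def)
    qed
  qed
  have dL: "((\<lambda>w. laurentV k m (tt w) (Bt k m Q (tt w)) (X w)) has_field_derivative
      (laurentV k m dt (dBt k m Q (tt w0) dt) (X w0) + dX * laurentVx k m (tt w0) (Bt k m Q (tt w0)) (X w0))) (at w0)"
    by (rule laurentV_deriv[OF _ dB dX X0]) (use dt in auto)
  have dP: "((\<lambda>w. X w ^ k) has_field_derivative of_nat k * (dX * X w0 ^ (k - Suc 0))) (at w0)"
    by (auto intro!: derivative_eq_intros dX)
  have "((\<lambda>w. X w ^ k + laurentV k m (tt w) (Bt k m Q (tt w)) (X w)) has_field_derivative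
      (of_nat k * (dX * X w0 ^ (k - Suc 0)) + (laurentV k m dt (dBt k m Q (tt w0) dt) (X w0) + dX * laurentVx k m (tt w0) (Bt k m Q (tt w0)) (X w0)))) (at w0)"
    by (rule DERIV_add[OF dP dL])
  then show ?thesis
    by (simp add: fL_eq[OF m] fLx_def algebra_simps)
qed

lemma inv_circle:
  assumes rho: "rho > 0"
  shows "contour_integral (circlepath 0 rho) (\<lambda>w. g (1 / w) / w ^ 2) = contour_integral (circlepath 0 (1 / rho)) g"
proof -
  have an: "(\<lambda>w::complex. 1 / w) analytic_on (- {0})"
    by (auto intro!: analytic_intros)
  have pi: "path_image (circlepath 0 rho) \<subseteq> - {0}" using rho by auto
  have "contour_integral ((\<lambda>w. 1 / w) \<circ> circlepath 0 rho) g
      = contour_integral (circlepath 0 rho) (\<lambda>w. deriv (\<lambda>w. 1 / w) w * g (1 / w))"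
    by (rule contour_integral_comp_analyticW[OF an valid_path_circlepath pi])
  also have "\<dots> = contour_integral (circlepath 0 rho) (\<lambda>w. - (g (1 / w) / w ^ 2))"
  proof (rule contour_integral_cong[OF refl])
    fix w assume "w \<in> path_image (circlepath 0 rho)"
    then have w: "w \<noteq> 0" using rho by auto
    have "deriv (\<lambda>w. 1 / w) w = - 1 / w ^ 2"
      by (rule DERIV_imp_deriv) (use w in \<open>auto intro!: derivative_eq_intros simp: power2_eq_square\<close>)
    then show "deriv (\<lambda>w. 1 / w) w * g (1 / w) = - (g (1 / w) / w ^ 2)" by simp
  qed
  also have "\<dots> = - contour_integral (circlepath 0 rho) (\<lambda>w. g (1 / w) / w ^ 2)"
    by (rule contour_integral_neg)
  finally have 1: "contour_integral ((\<lambda>w. 1 / w) \<circ> circlepath 0 rho) g = - contour_integral (circlepath 0 rho) (\<lambda>w. g (1 / w) / w ^ 2)" .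
  have "(\<lambda>w. 1 / w) \<circ> circlepath 0 rho = reversepath (circlepath 0 (1 / rho))"
  proof
    fix t
    have "exp (2 * of_real pi * \<i> * of_real (1 - t)) = exp (2 * of_real pi * \<i> - 2 * of_real pi * \<i> * of_real t)"
      by (simp add: algebra_simps)
    also have "\<dots> = exp (2 * of_real pi * \<i>) / exp (2 * of_real pi * \<i> * of_real t)"
      by (rule exp_diff)
    also have "\<dots> = inverse (exp (2 * of_real pi * \<i> * of_real t))"
      by (simp add: exp_two_pi_i divide_inverse)
    finally show "((\<lambda>w. 1 / w) \<circ> circlepath 0 rho) t = reversepath (circlepath 0 (1 / rho)) t"
      by (simp add: circlepath reversepath_def divide_inverse mult.commute)
  qed
  then have "contour_integral ((\<lambda>w. 1 / w) \<circ> circlepath 0 rho) g = - contour_integral (circlepath 0 (1 / rho)) g"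
    by (simp add: contour_integral_reversepath)
  with 1 show ?thesis by simp
qed

lemma residue_sum_inf:
  fixes g :: "complex \<Rightarrow> complex" and S :: "complex set"
  assumes fin: "finite S" and S0: "0 \<in> S" and holo: "g holomorphic_on (UNIV - S)"
  shows "- (residue g 0 + res_inf g) = (\<Sum>z\<in>S - {0}. residue g z)"
proof -
  define R where "R = 1 + Max (norm ` S)"
  have Rbig: "norm z < R" if "z \<in> S" for z
  proof -
    have "norm z \<le> Max (norm ` S)" using fin that by auto
    then show ?thesis by (simp add: R_def)
  qed
  have R0: "R > 0" using Rbig[OF S0] by simp
  define h where "h = (\<lambda>w. g (1 / w) / w ^ 2)"
  have "contour_integral (circlepath 0 (2 * R)) g = 2 * pi * \<i> * (\<Sum>p\<in>S. winding_number (circlepath 0 (2 * R)) p * residue g p)"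
  proof (rule Residue_theorem[of UNIV S])
    show "path_image (circlepath 0 (2 * R)) \<subseteq> UNIV - S"
    proof
      fix z assume "z \<in> path_image (circlepath 0 (2 * R))"
      then have "norm z = 2 * R" using R0 by (auto simp: path_image_circlepath sphere_def)
      then show "z \<in> UNIV - S" using Rbig R0 by fastforce
    qed
  qed (use fin holo in auto)
  also have "(\<Sum>p\<in>S. winding_number (circlepath 0 (2 * R)) p * residue g p) = (\<Sum>p\<in>S. residue g p)"
  proof (rule sum.cong[OF refl])
    fix p assume "p \<in> S"
    then have "norm (p - 0) < 2 * R" using Rbig R0 by fastforce
    then show "winding_number (circlepath 0 (2 * R)) p * residue g p = residue g p"
      by (simp add: winding_number_circlepath)
  qed
  finally have CI: "contour_integral (circlepath 0 (2 * R)) g = 2 * pi * \<i> * (\<Sum>p\<in>S. residue g p)" .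
  have hh: "h holomorphic_on (ball 0 (1 / R) - {0})"
  proof -
    have "(\<lambda>w. 1 / w) ` (ball 0 (1 / R) - {0}) \<subseteq> UNIV - S"
    proof
      fix y :: complex assume "y \<in> (\<lambda>w. 1 / w) ` (ball 0 (1 / R) - {0})"
      then obtain w :: complex where w: "w \<in> ball 0 (1 / R) - {0}" "y = 1 / w" by blast
      then have "norm w < 1 / R" "w \<noteq> 0" by auto
      moreover have "norm y = 1 / norm w" using w(2) by (simp add: norm_divide)
      moreover have nw: "norm w > 0" using w by simp
      moreover have "R < 1 / norm w"
        using pos_less_divide_eq[OF R0, of "norm w" 1] pos_less_divide_eq[OF nw, of R 1] \<open>norm w < 1 / R\<close>
        by (simp add: mult.commute)
      ultimately have "R < norm y" by simp
      then show "y \<in> UNIV - S" using Rbig by fastforce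
    qed
    then have "(\<lambda>w. g (1 / w)) holomorphic_on (ball 0 (1 / R) - {0})"
      by (intro holomorphic_on_compose_gen[OF _ holo, unfolded o_def]) (auto intro!: holomorphic_intros)
    then show ?thesis unfolding h_def by (auto intro!: holomorphic_intros)
  qed
  have "(h has_contour_integral 2 * pi * \<i> * residue h 0) (circlepath 0 (1 / (2 * R)))"
    by (rule base_residue[of "ball 0 (1 / R)"]) (use hh R0 in \<open>auto simp: field_simps\<close>)
  then have "contour_integral (circlepath 0 (1 / (2 * R))) h = 2 * pi * \<i> * residue h 0"
    by (rule contour_integral_unique)
  also have "contour_integral (circlepath 0 (1 / (2 * R))) h = contour_integral (circlepath 0 (2 * R)) g"
    unfolding h_def using inv_circle[of "1 / (2 * R)" g] R0 by simp
  finally have "residue h 0 = (\<Sum>p\<in>S. residue g p)" using CI by simp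
  then have "res_inf g = - (\<Sum>p\<in>S. residue g p)" by (simp add: res_inf_def h_def)
  moreover have "(\<Sum>p\<in>S. residue g p) = residue g 0 + (\<Sum>p\<in>S - {0}. residue g p)"
    using fin S0 by (simp add: sum.remove)
  ultimately show ?thesis by simp
qed

definition lpoly :: "nat \<Rightarrow> nat \<Rightarrow> (nat \<Rightarrow> complex) \<Rightarrow> (nat \<Rightarrow> complex) \<Rightarrow> complex poly" where
  "lpoly k m a b = (\<Sum>i=1..k. Polynomial.monom (a i) (k - i + m)) + (\<Sum>j=1..m. Polynomial.monom (b j) (m - j))"

lemma lpoly_eval:
  assumes x: "x \<noteq> 0"
  shows "poly (lpoly k m a b) x = x ^ m * laurentV k m a b x"
proof -
  have 1: "x ^ m * (a i * x ^ (k - i)) = a i * x ^ (k - i + m)" for i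
    by (simp add: power_add mult_ac)
  have 2: "x ^ m * (b j * inverse x ^ j) = b j * x ^ (m - j)" if "j \<in> {1..m}" for j
  proof -
    have "x ^ m = x ^ (m - j) * x ^ j" using that by (simp add: power_add[symmetric])
    then show ?thesis using x by (simp add: power_inverse field_simps)
  qed
  have A: "(\<Sum>i=1..k. a i * x ^ (k - i + m)) = (\<Sum>i=1..k. x ^ m * (a i * x ^ (k - i)))"
    by (rule sum.cong[OF refl]) (rule 1[symmetric])
  have B: "(\<Sum>j=1..m. b j * x ^ (m - j)) = (\<Sum>j=1..m. x ^ m * (b j * inverse x ^ j))"
    by (rule sum.cong[OF refl]) (rule 2[symmetric])
  show ?thesis
    unfolding lpoly_def laurentV_def poly_add poly_sum poly_monom distrib_left sum_distrib_left A B ..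
qed

lemma lpoly_deg:
  assumes "k \<ge> 1"
  shows "Polynomial.degree (lpoly k m a b) < k + m"
proof -
  have "Polynomial.degree (lpoly k m a b) \<le> k + m - 1"
    unfolding lpoly_def
    by (intro degree_add_le degree_sum_le; (rule order.trans[OF degree_monom_le])?) (use assms in auto)
  then show ?thesis using assms by simp
qed

lemma x_laurentVx:
  assumes x: "x \<noteq> 0"
  shows "x * laurentVx k m a b x = laurentV k m (\<lambda>i. of_nat (k - i) * a i) (\<lambda>j. - (of_nat j * b j)) x"
proof -
  have 1: "x * (a i * of_nat (k - i) * x ^ (k - i - 1)) = of_nat (k - i) * a i * x ^ (k - i)" for i
  proof (cases "k - i")
    case (Suc n) then show ?thesis by (simp add: mult_ac)
  qed simp
  have 2: "x * (b j * of_nat j * inverse x ^ Suc j) = - (- (of_nat j * b j) * inverse x ^ j)" for j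
    using x by (simp add: field_simps)
  show ?thesis
    unfolding laurentVx_def laurentV_def right_diff_distrib sum_distrib_left 1 2
    by (simp add: sum_negf)
qed

lemma crit_poly:
  fixes p :: "nat \<Rightarrow> complex"
  assumes k: "k \<ge> 1" and inj: "inj_on p {1..k+m}"
    and crit: "\<forall>s\<in>{1..k+m}. fLx k m Q t (p s) = 0 \<and> p s \<noteq> 0"
    and x: "x \<noteq> 0"
  shows "x ^ (m + 1) * fLx k m Q t x = of_nat k * (\<Prod>s=1..k+m. x - p s)"
proof -
  define a' where "a' = (\<lambda>i. of_nat (k - i) * t i)"
  define b' where "b' = (\<lambda>j. - (of_nat j * Bt k m Q t j))"
  define Pp where "Pp = Polynomial.monom (of_nat k) (k + m) + lpoly k m a' b'"
  have ev: "poly Pp y = y ^ (m + 1) * fLx k m Q t y" if y: "y \<noteq> 0" for y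
  proof -
    have "y ^ (m + 1) * fLx k m Q t y = of_nat k * (y ^ (m + 1) * y ^ (k - 1)) + y ^ m * (y * laurentVx k m t (Bt k m Q t) y)"
      by (simp add: fLx_def algebra_simps)
    also have "y ^ (m + 1) * y ^ (k - 1) = y ^ (k + m)"
    proof -
      have "y ^ (m + 1) * y ^ (k - 1) = y ^ (m + 1 + (k - 1))" by (rule power_add[symmetric])
      moreover have "m + 1 + (k - 1) = k + m" using k by simp
      ultimately show ?thesis by (simp add: add.commute)
    qed
    also have "y ^ m * (y * laurentVx k m t (Bt k m Q t) y) = poly (lpoly k m a' b') y"
      using y by (simp add: x_laurentVx lpoly_eval a'_def b'_def)
    finally show ?thesis by (simp add: Pp_def poly_monom)
  qed
  have cardA: "card (p ` {1..k+m}) = k + m" using inj by (simp add: card_image)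
  have degl: "Polynomial.degree (lpoly k m a' b') < k + m" by (rule lpoly_deg[OF k])
  have "Pp = Polynomial.smult (of_nat k) (Pi_poly p {1..k+m})"
  proof (rule poly_eqI_degree_lead_coeff[where n="k + m" and A="p ` {1..k+m}"])
    show "Polynomial.coeff Pp (k + m) = Polynomial.coeff (Polynomial.smult (of_nat k) (Pi_poly p {1..k+m})) (k + m)"
      using degl lead_Pi_poly[of "{1..k+m}" p] by (simp add: Pp_def coeff_eq_0)
    show "k + m \<le> card (p ` {1..k+m})" using cardA by simp
    show "Polynomial.degree Pp \<le> k + m" unfolding Pp_def
      using degl by (intro degree_add_le) (auto intro: order.trans[OF degree_monom_le])
    show "Polynomial.degree (Polynomial.smult (of_nat k) (Pi_poly p {1..k+m})) \<le> k + m"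
      by (rule order.trans[OF degree_smult_le]) (simp add: degree_Pi_poly)
    fix z assume "z \<in> p ` {1..k+m}"
    then obtain s where s: "s \<in> {1..k+m}" "z = p s" by blast
    have "poly Pp z = 0" using ev[of z] crit s by auto
    moreover have "poly (Polynomial.smult (of_nat k) (Pi_poly p {1..k+m})) z = 0"
      using s by (auto simp: poly_Pi_poly intro!: prod_zero)
    ultimately show "poly Pp z = poly (Polynomial.smult (of_nat k) (Pi_poly p {1..k+m})) z" by simp
  qed
  then show ?thesis using ev[OF x] by (simp add: poly_Pi_poly)
qed

lemma laurentV_holo: "laurentV k m a b holomorphic_on (- {0})"
  unfolding laurentV_def by (auto intro!: holomorphic_intros)

lemma fLx_holo: "fLx k m Q t holomorphic_on (- {0})"
  unfolding fLx_def laurentVx_def by (auto intro!: holomorphic_intros)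

locale critset =
  fixes k m :: nat and Q :: complex and t :: "nat \<Rightarrow> complex" and p :: "nat \<Rightarrow> complex"
  assumes k: "k \<ge> 1" and m: "m \<ge> 1" and inj: "inj_on p {1..k+m}"
    and crit: "\<forall>s\<in>{1..k+m}. fLx k m Q t (p s) = 0 \<and> p s \<noteq> 0"
begin

abbreviation "NN \<equiv> k + m"
definition "D s = (\<Prod>t\<in>{1..NN}-{s}. p s - p t)"
definition "PP x = (\<Prod>s=1..NN. x - p s)"
abbreviation "SS \<equiv> insert 0 (p ` {1..NN})"

lemma D_nz: "s \<in> {1..NN} \<Longrightarrow> D s \<noteq> 0"
proof -
  assume s: "s \<in> {1..NN}"
  have "\<forall>t\<in>{1..NN}-{s}. p s - p t \<noteq> 0"
  proof
    fix t assume t: "t \<in> {1..NN}-{s}"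
    then have "p s \<noteq> p t" using inj s unfolding inj_on_def by blast
    then show "p s - p t \<noteq> 0" by simp
  qed
  then show ?thesis unfolding D_def by (subst prod_zero_iff) auto
qed

lemma fLx_form: "x \<noteq> 0 \<Longrightarrow> fLx k m Q t x = of_nat k * PP x / x ^ (m + 1)"
  using crit_poly[OF k inj crit, of x] by (simp add: PP_def field_simps)

lemma PP_nz: "x \<notin> SS \<Longrightarrow> PP x \<noteq> 0"
  unfolding PP_def by (auto simp: prod_zero_iff)

lemma fLx_nz: "x \<notin> SS \<Longrightarrow> fLx k m Q t x \<noteq> 0"
  using fLx_form[of x] PP_nz[of x] k by auto

lemma I1:
  assumes x: "x \<notin> SS"
  shows "(\<Sum>s=1..NN. p s ^ m / (of_nat k * D s * (x - p s)) * laurentV k m a b (p s))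
       = laurentV k m a b x / (x * fLx k m Q t x)"
proof -
  have "poly (lpoly k m a b) x / PP x = (\<Sum>s=1..NN. poly (lpoly k m a b) (p s) / (D s * (x - p s)))"
  proof -
    have xP: "x \<notin> p ` {1..NN}" using x by auto
    show ?thesis unfolding PP_def D_def by (rule lagrange_div[OF inj lpoly_deg[OF k] xP])
  qed
  moreover have "poly (lpoly k m a b) y = y ^ m * laurentV k m a b y" if "y \<noteq> 0" for y
    using lpoly_eval[OF that] .
  moreover have "p s \<noteq> 0" if "s \<in> {1..NN}" for s using crit that by auto
  ultimately have L: "x ^ m * laurentV k m a b x / PP x = (\<Sum>s=1..NN. p s ^ m * laurentV k m a b (p s) / (D s * (x - p s)))"
    using x by (auto intro!: sum.cong)
  have x0: "x \<noteq> 0" using x by auto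
  have "laurentV k m a b x / (x * fLx k m Q t x) = (x ^ m * laurentV k m a b x / PP x) / of_nat k"
    using x0 PP_nz[OF x] k by (simp add: fLx_form field_simps)
  also have "\<dots> = (\<Sum>s=1..NN. p s ^ m / (of_nat k * D s * (x - p s)) * laurentV k m a b (p s))"
    unfolding L sum_divide_distrib by (intro sum.cong) (auto simp: field_simps)
  finally show ?thesis by simp
qed

definition "cc = (if k = 1 then 1 else (0::complex))"

lemma PF:
  assumes x: "x \<notin> SS"
  shows "1 / fLx k m Q t x = cc + (\<Sum>s=1..NN. p s ^ (m + 1) / (of_nat k * D s * (x - p s)))"
proof -
  define u0 where "u0 = Polynomial.monom 1 (m + 1) - (if k = 1 then Pi_poly p {1..NN} else 0)"
  have deg: "Polynomial.degree u0 < NN"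
  proof (cases "k = 1")
    case True
    have "Polynomial.degree u0 < NN"
    proof (rule degree_lessI)
      show "u0 \<noteq> 0 \<or> 0 < NN" using k by simp
      show "\<forall>i\<ge>NN. Polynomial.coeff u0 i = 0"
      proof (intro allI impI)
        fix i assume i: "i \<ge> NN"
        have c1: "Polynomial.coeff (Pi_poly p {1..NN}) NN = 1" using lead_Pi_poly[of "{1..NN}" p] by simp
        have "Polynomial.coeff (Pi_poly p {1..NN}) i = 0" if "i > NN"
          using that by (intro coeff_eq_0) (simp add: degree_Pi_poly)
        then show "Polynomial.coeff u0 i = 0" using True i c1 by (cases "i = NN") (auto simp: u0_def coeff_monom)
      qed
    qed
    then show ?thesis .
  next
    case False
    then have "m + 1 < NN" using k by simp
    then show ?thesis unfolding u0_def using False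
      by (simp add: degree_monom_eq)
  qed
  have ev: "poly u0 (p s) = p s ^ (m + 1)" if s: "s \<in> {1..NN}" for s
  proof -
    have ex: "\<exists>a\<in>{1..NN}. p s - p a = 0" using s by (intro bexI[of _ s]) simp_all
    have "poly (Pi_poly p {1..NN}) (p s) = 0" unfolding poly_Pi_poly
      using prod_zero[OF _ ex] by simp
    moreover have "poly u0 (p s) = p s ^ (m + 1) - (if k = 1 then poly (Pi_poly p {1..NN}) (p s) else 0)"
      by (simp add: u0_def poly_monom)
    ultimately show ?thesis by (simp only: if_cancel diff_zero)
  qed
  have xP: "x \<notin> p ` {1..NN}" using x by auto
  have "poly u0 x / PP x = (\<Sum>s=1..NN. poly u0 (p s) / (D s * (x - p s)))"
    unfolding PP_def D_def by (rule lagrange_div[OF inj deg xP])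
  also have "\<dots> = (\<Sum>s=1..NN. p s ^ (m + 1) / (D s * (x - p s)))"
    by (rule sum.cong[OF refl]) (simp add: ev)
  finally have L: "poly u0 x / PP x = (\<Sum>s=1..NN. p s ^ (m + 1) / (D s * (x - p s)))" .
  have x0: "x \<noteq> 0" using x by auto
  have ppx: "PP x \<noteq> 0" using PP_nz[OF x] .
  have "x ^ (m + 1) = poly u0 x + cc * PP x"
    by (simp add: u0_def cc_def poly_monom poly_Pi_poly PP_def)
  then have "1 / fLx k m Q t x = (poly u0 x + cc * PP x) / (of_nat k * PP x)"
    using x0 ppx k by (simp add: fLx_form field_simps)
  also have "\<dots> = cc + (poly u0 x / PP x) / of_nat k"
    using ppx k by (auto simp: cc_def field_simps)
  also have "\<dots> = cc + (\<Sum>s=1..NN. p s ^ (m + 1) / (of_nat k * D s * (x - p s)))"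
    unfolding L sum_divide_distrib by (simp add: field_simps)
  finally show ?thesis .
qed

end

context critset begin

lemma finSS: "finite SS" by simp

lemma g_holo:
  assumes geq: "\<And>x. x \<notin> SS \<Longrightarrow> g x = laurentV k m a b x * laurentV k m a' b' x / (x ^ 2 * fLx k m Q t x)"
  shows "g holomorphic_on (UNIV - SS)"
proof -
  have "(\<lambda>x. laurentV k m a b x * laurentV k m a' b' x / (x ^ 2 * fLx k m Q t x)) holomorphic_on (UNIV - SS)"
  proof (intro holomorphic_intros)
    show "laurentV k m a b holomorphic_on UNIV - SS"
      by (rule holomorphic_on_subset[OF laurentV_holo]) auto
    show "laurentV k m a' b' holomorphic_on UNIV - SS"
      by (rule holomorphic_on_subset[OF laurentV_holo]) auto
    show "fLx k m Q t holomorphic_on UNIV - SS"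
      by (rule holomorphic_on_subset[OF fLx_holo]) auto
    fix z assume "z \<in> UNIV - SS"
    then show "z ^ 2 * fLx k m Q t z \<noteq> 0" using fLx_nz[of z] by auto
  qed
  then show ?thesis by (rule holomorphic_transform) (use geq in auto)
qed

lemma res_p:
  assumes s: "s \<in> {1..NN}"
    and geq: "\<And>x. x \<notin> SS \<Longrightarrow> g x = laurentV k m a b x * laurentV k m a' b' x / (x ^ 2 * fLx k m Q t x)"
  shows "residue g (p s) = laurentV k m a b (p s) * laurentV k m a' b' (p s) * (p s ^ (m - 1) / (of_nat k * D s))"
proof -
  define U where "U = - (SS - {p s})"
  define H where "H w = laurentV k m a b w * laurentV k m a' b' w * w ^ (m - 1) / (of_nat k * (\<Prod>t\<in>{1..NN}-{s}. w - p t))" for w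
  have ps0: "p s \<noteq> 0" using crit s by auto
  have oU: "open U" unfolding U_def by (intro open_Compl finite_imp_closed) auto
  have psU: "p s \<in> U" unfolding U_def by blast
  have U0: "w \<noteq> 0" if "w \<in> U" for w using that ps0 by (auto simp: U_def)
  have Ut: "w \<noteq> p t" if "w \<in> U" "t \<in> {1..NN}-{s}" for w t
  proof
    assume "w = p t"
    moreover have "p t \<noteq> p s" using inj s that(2) unfolding inj_on_def by blast
    ultimately show False using that by (auto simp: U_def)
  qed
  have UD: "U - {p s} = UNIV - SS" using s by (auto simp: U_def)
  have holo: "g holomorphic_on (U - {p s})" unfolding UD by (rule g_holo[OF geq])
  have Hholo: "H holomorphic_on U"
    unfolding H_def
  proof (intro holomorphic_intros)
    show "laurentV k m a b holomorphic_on U"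
      by (rule holomorphic_on_subset[OF laurentV_holo]) (use U0 in auto)
    show "laurentV k m a' b' holomorphic_on U"
      by (rule holomorphic_on_subset[OF laurentV_holo]) (use U0 in auto)
    fix z assume z: "z \<in> U"
    have "(\<Prod>t\<in>{1..NN}-{s}. z - p t) \<noteq> 0" using Ut[OF z] by (subst prod_zero_iff) auto
    then show "of_nat k * (\<Prod>t\<in>{1..NN}-{s}. z - p t) \<noteq> 0" using k by simp
  qed
  have "isCont H (p s)"
    using holomorphic_on_imp_continuous_on[OF Hholo] oU psU continuous_on_eq_continuous_at by blast
  then have lim: "(H \<longlongrightarrow> H (p s)) (at (p s))" by (simp add: isCont_def)
  have ev: "eventually (\<lambda>w. w \<in> U - {p s}) (at (p s))" by (rule eventually_at_in_open[OF oU psU])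
  have eq: "H w = g w * (w - p s)" if w: "w \<in> U - {p s}" for w
  proof -
    have wS: "w \<notin> SS" using w UD by auto
    have w0: "w \<noteq> 0" using wS by auto
    have ws: "w - p s \<noteq> 0" using w by auto
    have pr: "(\<Prod>t\<in>{1..NN}-{s}. w - p t) \<noteq> 0" using Ut w by (subst prod_zero_iff) auto
    have PPe: "PP w = (w - p s) * (\<Prod>t\<in>{1..NN}-{s}. w - p t)"
      unfolding PP_def using s by (simp only: prod.remove[of "{1..NN}" s] finite_atLeastAtMost)
    have pw: "w ^ (m + 1) = w ^ (m - 1) * w ^ 2"
    proof -
      have "w ^ (m - 1) * w ^ 2 = w ^ (m - 1 + 2)" by (rule power_add[symmetric])
      moreover have "m - 1 + 2 = m + 1" using m by simp
      ultimately show ?thesis by simp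
    qed
    have "g w = laurentV k m a b w * laurentV k m a' b' w * w ^ (m + 1) / (w ^ 2 * (of_nat k * PP w))"
      using geq[OF wS] w0 by (simp add: fLx_form)
    also have "\<dots> = laurentV k m a b w * laurentV k m a' b' w * w ^ (m - 1) / (of_nat k * PP w)"
      unfolding pw using w0 by (simp add: field_simps)
    finally show ?thesis unfolding H_def PPe using ws pr k by (simp add: field_simps)
  qed
  have "((\<lambda>w. g w * (w - p s)) \<longlongrightarrow> H (p s)) (at (p s))"
    by (rule Lim_transform_eventually[OF lim]) (use ev eq in \<open>auto elim!: eventually_mono\<close>)
  then have "residue g (p s) = H (p s)"
    by (intro residue_simple'[OF oU psU holo])
  also have "\<dots> = laurentV k m a b (p s) * laurentV k m a' b' (p s) * (p s ^ (m - 1) / (of_nat k * D s))"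
    by (simp add: H_def D_def)
  finally show ?thesis .
qed

lemma eta_formula:
  assumes geq: "\<And>x. x \<notin> SS \<Longrightarrow> g x = laurentV k m a b x * laurentV k m a' b' x / (x ^ 2 * fLx k m Q t x)"
  shows "- (residue g 0 + res_inf g) = (\<Sum>s=1..NN. laurentV k m a b (p s) * laurentV k m a' b' (p s) * (p s ^ (m - 1) / (of_nat k * D s)))"
proof -
  have "- (residue g 0 + res_inf g) = (\<Sum>z\<in>SS - {0}. residue g z)"
    by (rule residue_sum_inf[OF finSS _ g_holo[OF geq]]) simp
  also have "SS - {0} = p ` {1..NN}" using crit by auto
  also have "(\<Sum>z\<in>p ` {1..NN}. residue g z) = (\<Sum>s=1..NN. residue g (p s))"
    by (rule sum.reindex[OF inj, unfolded o_def])
  also have "\<dots> = (\<Sum>s=1..NN. laurentV k m a b (p s) * laurentV k m a' b' (p s) * (p s ^ (m - 1) / (of_nat k * D s)))"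
    by (rule sum.cong[OF refl]) (rule res_p[OF _ geq])
  finally show ?thesis .
qed

end

context critset begin

lemma pair_ab:
  assumes xa: "xa \<notin> SS" and xb: "xb \<notin> SS" and ne: "xa \<noteq> xb"
  shows "(\<Sum>s=1..NN. p s ^ (m + 1) / (of_nat k * D s * (xa - p s) * (xb - p s)))
       = - (1 / fLx k m Q t xa - 1 / fLx k m Q t xb) / (xa - xb)"
proof -
  have "1 / fLx k m Q t xa - 1 / fLx k m Q t xb
      = (\<Sum>s=1..NN. p s ^ (m + 1) / (of_nat k * D s * (xa - p s)) - p s ^ (m + 1) / (of_nat k * D s * (xb - p s)))"
    unfolding PF[OF xa] PF[OF xb] sum_subtractf by simp
  also have "\<dots> = (\<Sum>s=1..NN. (xb - xa) * (p s ^ (m + 1) / (of_nat k * D s * (xa - p s) * (xb - p s))))"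
  proof (rule sum.cong[OF refl])
    fix s assume s: "s \<in> {1..NN}"
    have a: "xa - p s \<noteq> 0" using xa s by auto
    have b: "xb - p s \<noteq> 0" using xb s by auto
    have d: "of_nat k * D s \<noteq> 0" using D_nz[OF s] k by simp
    show "p s ^ (m + 1) / (of_nat k * D s * (xa - p s)) - p s ^ (m + 1) / (of_nat k * D s * (xb - p s))
        = (xb - xa) * (p s ^ (m + 1) / (of_nat k * D s * (xa - p s) * (xb - p s)))"
    proof -
      have aux: "\<And>C E a b::complex. a \<noteq> 0 \<Longrightarrow> b \<noteq> 0 \<Longrightarrow> E \<noteq> 0 \<Longrightarrow>
          C / (E * a) - C / (E * b) = (b - a) * (C / (E * a * b))"
        by (simp add: field_simps)
      show ?thesis using aux[OF a b d, of "p s ^ (m + 1)"] by simp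
    qed
  qed
  also have "\<dots> = (xb - xa) * (\<Sum>s=1..NN. p s ^ (m + 1) / (of_nat k * D s * (xa - p s) * (xb - p s)))"
    by (simp add: sum_distrib_left)
  finally have "1 / fLx k m Q t xa - 1 / fLx k m Q t xb = (xb - xa) * (\<Sum>s=1..NN. p s ^ (m + 1) / (of_nat k * D s * (xa - p s) * (xb - p s)))" .
  then show ?thesis using ne by (simp add: field_simps)
qed

lemma pair_aa:
  assumes xa: "xa \<notin> SS"
  shows "(\<Sum>s=1..NN. p s ^ (m + 1) / (of_nat k * D s * (xa - p s) ^ 2))
       = deriv (fLx k m Q t) xa / (fLx k m Q t xa) ^ 2"
proof -
  define G where "G x = cc + (\<Sum>s=1..NN. p s ^ (m + 1) / (of_nat k * D s * (x - p s)))" for x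
  have oV: "open (- SS)" by (intro open_Compl finite_imp_closed) auto
  have xV: "xa \<in> - SS" using xa by simp
  have dS: "((\<lambda>x. \<Sum>s=1..NN. p s ^ (m + 1) / (of_nat k * D s * (x - p s))) has_field_derivative (\<Sum>s=1..NN. - (p s ^ (m + 1) / (of_nat k * D s * (xa - p s) ^ 2)))) (at xa)"
  proof (rule DERIV_sum)
    fix s assume s: "s \<in> {1..NN}"
    have a: "xa - p s \<noteq> 0" using xa s by auto
    have d: "of_nat k * D s \<noteq> 0" using D_nz[OF s] k by simp
    have "((\<lambda>x. p s ^ (m + 1) / (of_nat k * D s * (x - p s))) has_field_derivative
        - (p s ^ (m + 1) * (of_nat k * D s) / (of_nat k * D s * (xa - p s)) ^ 2)) (at xa)"
      using a d by (auto intro!: derivative_eq_intros simp: power2_eq_square)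
    moreover have aux2: "\<And>C E a :: complex. E \<noteq> 0 \<Longrightarrow> C * E / (E * a) ^ 2 = C / (E * a ^ 2)"
      by (simp add: power2_eq_square)
    ultimately show "((\<lambda>x. p s ^ (m + 1) / (of_nat k * D s * (x - p s))) has_field_derivative
        - (p s ^ (m + 1) / (of_nat k * D s * (xa - p s) ^ 2))) (at xa)"
      using aux2[OF d] by metis
  qed
  have dG: "(G has_field_derivative (\<Sum>s=1..NN. - (p s ^ (m + 1) / (of_nat k * D s * (xa - p s) ^ 2)))) (at xa)"
    unfolding G_def using DERIV_add[OF DERIV_const[of cc] dS] by simp
  have eqG: "G x = inverse (fLx k m Q t x)" if "x \<in> - SS" for x
    using PF[of x] that by (simp add: G_def divide_inverse)
  have dinv: "((\<lambda>x. inverse (fLx k m Q t x)) has_field_derivative (\<Sum>s=1..NN. - (p s ^ (m + 1) / (of_nat k * D s * (xa - p s) ^ 2)))) (at xa)"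
    by (rule has_field_derivative_transform_within_open[OF dG oV xV eqG])
  have fd: "fLx k m Q t field_differentiable at xa"
    by (rule holomorphic_on_imp_differentiable_at[OF fLx_holo]) (use xa in auto)
  then have df: "(fLx k m Q t has_field_derivative deriv (fLx k m Q t) xa) (at xa)"
    by (simp add: DERIV_deriv_iff_field_differentiable)
  have nz: "fLx k m Q t xa \<noteq> 0" using fLx_nz[OF xa] .
  have dinv2: "((\<lambda>x. inverse (fLx k m Q t x)) has_field_derivative
      - (inverse (fLx k m Q t xa) * deriv (fLx k m Q t) xa * inverse (fLx k m Q t xa))) (at xa)"
    by (rule DERIV_inverse'[OF df nz])
  have "(\<Sum>s=1..NN. - (p s ^ (m + 1) / (of_nat k * D s * (xa - p s) ^ 2)))
      = - (inverse (fLx k m Q t xa) * deriv (fLx k m Q t) xa * inverse (fLx k m Q t xa))"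
    by (rule DERIV_unique[OF dinv dinv2])
  then show ?thesis using nz by (simp add: sum_negf field_simps power2_eq_square)
qed

end

lemma double_swap:
  fixes I W :: "nat \<Rightarrow> complex" and a :: "nat \<Rightarrow> nat \<Rightarrow> complex"
  shows "(\<Sum>s\<in>B. W s * (\<Sum>i\<in>A. I i * a i s) * c s) = (\<Sum>i\<in>A. I i * (\<Sum>s\<in>B. a i s * c s * W s))"
proof -
  have "(\<Sum>s\<in>B. W s * (\<Sum>i\<in>A. I i * a i s) * c s) = (\<Sum>s\<in>B. \<Sum>i\<in>A. I i * (a i s * c s * W s))"
    by (intro sum.cong refl) (simp add: sum_distrib_left sum_distrib_right mult_ac)
  also have "\<dots> = (\<Sum>i\<in>A. \<Sum>s\<in>B. I i * (a i s * c s * W s))" by (rule sum.swap)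
  also have "\<dots> = (\<Sum>i\<in>A. I i * (\<Sum>s\<in>B. a i s * c s * W s))" by (simp add: sum_distrib_left)
  finally show ?thesis .
qed

lemma triple_swap:
  fixes I J W :: "nat \<Rightarrow> complex" and a :: "nat \<Rightarrow> nat \<Rightarrow> complex"
  shows "(\<Sum>i\<in>A. \<Sum>j\<in>A. I i * J j * (\<Sum>s\<in>B. a i s * a j s * W s))
       = (\<Sum>s\<in>B. W s * (\<Sum>i\<in>A. I i * a i s) * (\<Sum>j\<in>A. J j * a j s))"
proof -
  have "(\<Sum>i\<in>A. \<Sum>j\<in>A. I i * J j * (\<Sum>s\<in>B. a i s * a j s * W s))
      = (\<Sum>i\<in>A. \<Sum>j\<in>A. \<Sum>s\<in>B. I i * J j * (a i s * a j s * W s))"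
    by (simp add: sum_distrib_left)
  also have "\<dots> = (\<Sum>i\<in>A. \<Sum>s\<in>B. \<Sum>j\<in>A. I i * J j * (a i s * a j s * W s))"
    by (intro sum.cong refl sum.swap)
  also have "\<dots> = (\<Sum>s\<in>B. \<Sum>i\<in>A. \<Sum>j\<in>A. I i * J j * (a i s * a j s * W s))"
    by (rule sum.swap)
  also have "\<dots> = (\<Sum>s\<in>B. W s * (\<Sum>i\<in>A. I i * a i s) * (\<Sum>j\<in>A. J j * a j s))"
    by (intro sum.cong refl) (simp add: sum_distrib_left sum_distrib_right mult_ac)
  finally show ?thesis .
qed

theorem mainTheorem12:
  fixes k m :: nat and Q :: complex and r :: real
    and T :: "(nat \<Rightarrow> complex) \<Rightarrow> (nat \<Rightarrow> complex)"
    and tau0 :: "nat \<Rightarrow> complex" and lam0 :: complex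
    and xa xb :: "(nat \<Rightarrow> complex) \<Rightarrow> complex \<Rightarrow> complex"
    and Ia Ib :: "nat \<Rightarrow> complex"
  defines "N \<equiv> k + m"
    and "F \<equiv> (\<lambda>tau x. fL k m Q (T tau) x)"
  assumes "k \<ge> 1" and "m \<ge> 1" and "Q \<noteq> 0" and "r > 0"
    and T_holo: "\<forall>l\<in>{1..N}. holo N (polydisc N tau0 r) (\<lambda>tau. T tau l)"
    and T_inv: "\<forall>tau\<in>polydisc N tau0 r. \<forall>i\<in>{1..N}. flat k m Q (T tau) i = tau i"
    and ss: "semisimple N F tau0"
    and xa: "one_point_cycle N F tau0 lam0 xa"
    and xb: "one_point_cycle N F tau0 lam0 xb"
    and Ia: "\<forall>j\<in>{1..N}. (\<Sum>i = 1..N. Ia i * eta F tau0 i j) = - pd j (\<lambda>z. xa z lam0) tau0 / xa tau0 lam0"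
    and Ib: "\<forall>j\<in>{1..N}. (\<Sum>i = 1..N. Ib i * eta F tau0 i j) = - pd j (\<lambda>z. xb z lam0) tau0 / xb tau0 lam0"
  shows "(xa tau0 lam0 \<noteq> xb tau0 lam0 \<longrightarrow>
            (\<Sum>i = 1..N. \<Sum>j = 1..N. Ia i * Ib j * eta F tau0 i j)
              = - (deriv (xa tau0) lam0 - deriv (xb tau0) lam0) / (xa tau0 lam0 - xb tau0 lam0))
       \<and> (\<Sum>i = 1..N. \<Sum>j = 1..N. Ia i * Ia j * eta F tau0 i j)
              = deriv (\<lambda>l. deriv (F tau0) (xa tau0 l)) lam0 / deriv (F tau0) (xa tau0 lam0)"
proof -
  have N: "N = k + m" by (simp add: N_def)
  have k1: "k \<ge> 1" and m1: "m \<ge> 1" and r0: "r > 0" using assms by auto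
  define t0 where "t0 = T tau0"
  have upd: "tau0(j := w) \<in> polydisc N tau0 rr" if "cmod (w - tau0 j) < rr" for j w rr
    unfolding polydisc_def using that by (auto simp: le_less_trans[OF norm_ge_zero])
  have upd0: "tau0 \<in> polydisc N tau0 rr" if "rr > 0" for rr
    using that by (simp add: polydisc_def)
  define dT where "dT j l = deriv (\<lambda>w. T (tau0(j := w)) l) (tau0 j)" for j l
  have dTd: "((\<lambda>w. T (tau0(j := w)) l) has_field_derivative dT j l) (at (tau0 j))"
    if "j \<in> {1..N}" "l \<in> {1..N}" for j l
  proof -
    have "holo N (polydisc N tau0 r) (\<lambda>tau. T tau l)" using T_holo that by auto
    then have "(\<lambda>w. T (tau0(j := w)) l) field_differentiable at (tau0 j)"
      unfolding holo_def using upd0[OF r0] that by auto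
    then show ?thesis by (simp add: dT_def DERIV_deriv_iff_field_differentiable)
  qed
  define phi where "phi j = laurentV k m (dT j) (dBt k m Q t0 (dT j))" for j
  have chainj: "((\<lambda>w. F (tau0(j := w)) (X w)) has_field_derivative
        (phi j (X (tau0 j)) + dX * fLx k m Q t0 (X (tau0 j)))) (at (tau0 j))"
    if j: "j \<in> {1..N}" and dX: "(X has_field_derivative dX) (at (tau0 j))" and X0: "X (tau0 j) \<noteq> 0"
    for j X dX
  proof -
    have "((\<lambda>w. fL k m Q (T (tau0(j := w))) (X w)) has_field_derivative
       (laurentV k m (dT j) (dBt k m Q (T (tau0(j := tau0 j))) (dT j)) (X (tau0 j))
         + dX * fLx k m Q (T (tau0(j := tau0 j))) (X (tau0 j)))) (at (tau0 j))"
      by (rule fL_chain[where tt="\<lambda>w. T (tau0(j := w))" and dt="dT j", OF m1 _ dX X0])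
         (use dTd j N in auto)
    then show ?thesis by (simp add: F_def phi_def t0_def)
  qed
  have dF: "(F tau0 has_field_derivative fLx k m Q t0 x) (at x)" if x: "x \<noteq> 0" for x
  proof -
    have "((\<lambda>w. fL k m Q t0 w) has_field_derivative
       (laurentV k m (\<lambda>l. 0) (dBt k m Q t0 (\<lambda>l. 0)) x + 1 * fLx k m Q t0 x)) (at x)"
      by (rule fL_chain[where tt="\<lambda>w. t0" and dt="\<lambda>l. 0" and X="\<lambda>w. w", OF m1 _ _ x]) auto
    moreover have "laurentV k m (\<lambda>l. 0) (dBt k m Q t0 (\<lambda>l. 0)) x = 0"
      by (simp add: laurentV_def dBt_def)
    ultimately show ?thesis by (simp add: F_def t0_def)
  qed
  have dF': "deriv (F tau0) x = fLx k m Q t0 x" if "x \<noteq> 0" for x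
    using DERIV_imp_deriv[OF dF[OF that]] .
  have pdF: "pd j (\<lambda>z. F z x) tau0 = phi j x" if "j \<in> {1..N}" "x \<noteq> 0" for j x
  proof -
    have "((\<lambda>w. F (tau0(j := w)) x) has_field_derivative (phi j x + 0 * fLx k m Q t0 x)) (at (tau0 j))"
      using chainj[OF that(1), of "\<lambda>w. x" 0] that(2) by simp
    then show ?thesis unfolding pd_def using DERIV_imp_deriv by fastforce
  qed
  obtain rc c where rc: "rc > 0"
    and cholo: "\<forall>i\<in>{1..N}. holo N (polydisc N tau0 rc) (c i)"
    and ccrit: "\<forall>z\<in>polydisc N tau0 rc. \<forall>i\<in>{1..N}. c i z \<noteq> 0 \<and> deriv (F z) (c i z) = 0 \<and> deriv (deriv (F z)) (c i z) \<noteq> 0"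
    and cinj: "\<forall>z\<in>polydisc N tau0 rc. inj_on (\<lambda>i. c i z) {1..N}"
    and jac: "\<forall>v. (\<forall>i\<in>{1..N}. (\<Sum>j = 1..N. pd j (\<lambda>z. F z (c i z)) tau0 * v j) = 0) \<longrightarrow> (\<forall>j\<in>{1..N}. v j = 0)"
    using ss unfolding semisimple_def by blast
  define p where "p s = c s tau0" for s
  have tc: "tau0 \<in> polydisc N tau0 rc" by (rule upd0[OF rc])
  have crit: "\<forall>s\<in>{1..k+m}. fLx k m Q t0 (p s) = 0 \<and> p s \<noteq> 0"
  proof
    fix s assume "s \<in> {1..k+m}"
    then have s: "s \<in> {1..N}" using N by simp
    have "p s \<noteq> 0" "deriv (F tau0) (p s) = 0" using ccrit tc s by (auto simp: p_def)
    then show "fLx k m Q t0 (p s) = 0 \<and> p s \<noteq> 0" using dF' by auto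
  qed
  have injp: "inj_on p {1..k+m}"
  proof -
    have i1: "inj_on (\<lambda>i. c i tau0) {1..N}" using cinj tc by blast
    have pe: "p = (\<lambda>i. c i tau0)" by (rule ext) (simp add: p_def)
    show ?thesis using i1 unfolding pe N .
  qed
  interpret cs: critset k m Q t0 p by (unfold_locales) (use k1 m1 injp crit in auto)
  have pdc: "pd j (\<lambda>z. F z (c i z)) tau0 = phi j (p i)" if i: "i \<in> {1..N}" and j: "j \<in> {1..N}" for i j
  proof -
    have "holo N (polydisc N tau0 rc) (c i)" using cholo i by auto
    then have "(\<lambda>w. c i (tau0(j := w))) field_differentiable at (tau0 j)"
      unfolding holo_def using tc j by auto
    then obtain dc where dc: "((\<lambda>w. c i (tau0(j := w))) has_field_derivative dc) (at (tau0 j))"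
      using field_differentiable_def by blast
    have "p i \<noteq> 0" "fLx k m Q t0 (p i) = 0" using crit i N by auto
    then have "((\<lambda>w. F (tau0(j := w)) (c i (tau0(j := w)))) has_field_derivative phi j (p i)) (at (tau0 j))"
      using chainj[OF j dc] by (simp add: p_def)
    then show ?thesis unfolding pd_def using DERIV_imp_deriv by fastforce
  qed
  have Minj: "\<forall>v. (\<forall>i\<in>{1..N}. (\<Sum>j = 1..N. phi j (p i) * v j) = 0) \<longrightarrow> (\<forall>j\<in>{1..N}. v j = 0)"
  proof (intro allI impI)
    fix v assume h: "\<forall>i\<in>{1..N}. (\<Sum>j = 1..N. phi j (p i) * v j) = 0"
    have "\<forall>i\<in>{1..N}. (\<Sum>j = 1..N. pd j (\<lambda>z. F z (c i z)) tau0 * v j) = 0"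
      using h pdc by simp
    then show "\<forall>j\<in>{1..N}. v j = 0" using jac by blast
  qed
  define W where "W s = p s ^ (m - 1) / (of_nat k * cs.D s)" for s
  have eta_eq: "eta F tau0 i j = (\<Sum>s=1..N. phi i (p s) * phi j (p s) * W s)"
    if i: "i \<in> {1..N}" and j: "j \<in> {1..N}" for i j
  proof -
    define g where "g = (\<lambda>x. pd i (\<lambda>z. F z x) tau0 * pd j (\<lambda>z. F z x) tau0 / (x ^ 2 * deriv (F tau0) x))"
    have geq: "g x = laurentV k m (dT i) (dBt k m Q t0 (dT i)) x * laurentV k m (dT j) (dBt k m Q t0 (dT j)) x
                  / (x ^ 2 * fLx k m Q t0 x)" if "x \<notin> cs.SS" for x
    proof -
      have "x \<noteq> 0" using that by auto
      then show ?thesis using pdF[OF i] pdF[OF j] dF' by (simp add: g_def phi_def)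
    qed
    have "eta F tau0 i j = - (residue g 0 + res_inf g)"
      by (simp add: eta_def res_pair_def g_def Let_def)
    also have "\<dots> = (\<Sum>s=1..k+m. laurentV k m (dT i) (dBt k m Q t0 (dT i)) (p s) * laurentV k m (dT j) (dBt k m Q t0 (dT j)) (p s) * (p s ^ (m - 1) / (of_nat k * cs.D s)))"
      by (rule cs.eta_formula[OF geq])
    also have "\<dots> = (\<Sum>s=1..k+m. phi i (p s) * phi j (p s) * W s)"
      unfolding W_def phi_def ..
    finally show ?thesis using N by simp
  qed
  have cyc: "X tau0 lam0 \<notin> cs.SS
      \<and> (X tau0 has_field_derivative 1 / fLx k m Q t0 (X tau0 lam0)) (at lam0)
      \<and> (\<forall>j\<in>{1..N}. - pd j (\<lambda>z. X z lam0) tau0 / X tau0 lam0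
            = phi j (X tau0 lam0) / (X tau0 lam0 * fLx k m Q t0 (X tau0 lam0)))
      \<and> (\<exists>rho>0. \<forall>l\<in>ball lam0 rho. X tau0 l \<noteq> 0)"
    if opc: "one_point_cycle N F tau0 lam0 X" for X
  proof -
    obtain rx where rx: "rx > 0" and h2: "holo2 N (polydisc N tau0 rx) (ball lam0 rx) X"
      and sol: "\<forall>z\<in>polydisc N tau0 rx. \<forall>l\<in>ball lam0 rx. X z l \<noteq> 0 \<and> F z (X z l) = l"
      using opc unfolding one_point_cycle_def by blast
    have tP: "tau0 \<in> polydisc N tau0 rx" by (rule upd0[OF rx])
    have lB: "lam0 \<in> ball lam0 rx" using rx by simp
    define x0 where "x0 = X tau0 lam0"
    have x0nz: "x0 \<noteq> 0" using sol tP lB by (auto simp: x0_def)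
    have "X tau0 field_differentiable at lam0" using h2 tP lB unfolding holo2_def by auto
    then have dXl: "(X tau0 has_field_derivative deriv (X tau0) lam0) (at lam0)"
      by (simp add: DERIV_deriv_iff_field_differentiable)
    have dcomp: "((\<lambda>l. F tau0 (X tau0 l)) has_field_derivative fLx k m Q t0 x0 * deriv (X tau0) lam0) (at lam0)"
      using DERIV_chain2[OF dF[OF x0nz[unfolded x0_def]] dXl] by (simp add: x0_def)
    have did: "((\<lambda>l. F tau0 (X tau0 l)) has_field_derivative 1) (at lam0)"
      by (rule has_field_derivative_transform_within_open[OF DERIV_ident open_ball lB]) (use sol tP in auto)
    have p1: "fLx k m Q t0 x0 * deriv (X tau0) lam0 = 1" by (rule DERIV_unique[OF dcomp did])
    then have fnz: "fLx k m Q t0 x0 \<noteq> 0" by auto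
    have Dl: "deriv (X tau0) lam0 = 1 / fLx k m Q t0 x0" using p1 fnz by (simp add: field_simps)
    have x0S: "x0 \<notin> cs.SS"
    proof
      assume "x0 \<in> cs.SS"
      then obtain s where "s \<in> {1..k+m}" "x0 = p s" using x0nz by auto
      then show False using crit fnz by auto
    qed
    have tau: "- pd j (\<lambda>z. X z lam0) tau0 / x0 = phi j x0 / (x0 * fLx k m Q t0 x0)" if j: "j \<in> {1..N}" for j
    proof -
      have "(\<lambda>w. X (tau0(j := w)) lam0) field_differentiable at (tau0 j)"
        using h2 tP lB j unfolding holo2_def by auto
      then have dXj: "((\<lambda>w. X (tau0(j := w)) lam0) has_field_derivative pd j (\<lambda>z. X z lam0) tau0) (at (tau0 j))"
        by (simp add: pd_def DERIV_deriv_iff_field_differentiable)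
      have d1: "((\<lambda>w. F (tau0(j := w)) (X (tau0(j := w)) lam0)) has_field_derivative
          (phi j x0 + pd j (\<lambda>z. X z lam0) tau0 * fLx k m Q t0 x0)) (at (tau0 j))"
        using chainj[OF j dXj] x0nz by (simp add: x0_def)
      have d2: "((\<lambda>w. F (tau0(j := w)) (X (tau0(j := w)) lam0)) has_field_derivative 0) (at (tau0 j))"
      proof (rule has_field_derivative_transform_within_open[OF DERIV_const open_ball])
        show "tau0 j \<in> ball (tau0 j) rx" using rx by simp
        fix w assume "w \<in> ball (tau0 j) rx"
        then have "tau0(j := w) \<in> polydisc N tau0 rx" by (intro upd) (simp add: dist_norm norm_minus_commute)
        then show "lam0 = F (tau0(j := w)) (X (tau0(j := w)) lam0)" using sol lB by auto
      qed
      have "phi j x0 + pd j (\<lambda>z. X z lam0) tau0 * fLx k m Q t0 x0 = 0" by (rule DERIV_unique[OF d1 d2])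
      then have "pd j (\<lambda>z. X z lam0) tau0 * fLx k m Q t0 x0 = - phi j x0"
        by (simp add: eq_neg_iff_add_eq_0 add.commute)
      then have "pd j (\<lambda>z. X z lam0) tau0 = - phi j x0 / fLx k m Q t0 x0" using fnz by (metis nonzero_mult_div_cancel_right)
      then show ?thesis using x0nz fnz by (simp add: field_simps)
    qed
    have nzb: "\<forall>l\<in>ball lam0 rx. X tau0 l \<noteq> 0" using sol tP by auto
    show ?thesis using x0S dXl Dl tau nzb rx unfolding x0_def by auto
  qed
  have Idet: "\<forall>s\<in>{1..N}. (\<Sum>i=1..N. I i * phi i (p s)) = p s / (x0 - p s)"
    if x0S: "x0 \<notin> cs.SS" and hyp: "\<forall>j\<in>{1..N}. (\<Sum>i=1..N. I i * eta F tau0 i j) = phi j x0 / (x0 * fLx k m Q t0 x0)"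
    for I x0
  proof -
    define \<beta> where "\<beta> s = p s ^ m / (of_nat k * cs.D s * (x0 - p s))" for s
    define y where "y s = W s * (\<Sum>i=1..N. I i * phi i (p s)) - \<beta> s" for s
    have "\<forall>j\<in>{1..N}. (\<Sum>s=1..N. y s * phi j (p s)) = 0"
    proof
      fix j assume j: "j \<in> {1..N}"
      have A: "(\<Sum>s=1..N. W s * (\<Sum>i=1..N. I i * phi i (p s)) * phi j (p s)) = (\<Sum>i=1..N. I i * eta F tau0 i j)"
      proof -
        have "(\<Sum>s=1..N. W s * (\<Sum>i=1..N. I i * phi i (p s)) * phi j (p s))
            = (\<Sum>i=1..N. I i * (\<Sum>s=1..N. phi i (p s) * phi j (p s) * W s))"
          by (rule double_swap[where W=W and I=I and a="\<lambda>i s. phi i (p s)" and c="\<lambda>s. phi j (p s)"])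
        also have "\<dots> = (\<Sum>i=1..N. I i * eta F tau0 i j)"
        proof (rule sum.cong[OF refl])
          fix i assume i: "i \<in> {1..N}"
          show "I i * (\<Sum>s=1..N. phi i (p s) * phi j (p s) * W s) = I i * eta F tau0 i j"
            by (subst eta_eq[OF i j]) (rule refl)
        qed
        finally show ?thesis .
      qed
      have B: "(\<Sum>s=1..N. \<beta> s * phi j (p s)) = phi j x0 / (x0 * fLx k m Q t0 x0)"
        unfolding \<beta>_def phi_def N using cs.I1[OF x0S] .
      show "(\<Sum>s=1..N. y s * phi j (p s)) = 0"
        unfolding y_def left_diff_distrib sum_subtractf A B using hyp j by simp
    qed
    then have y0: "\<forall>s\<in>{1..N}. y s = 0"
      by (rule transpose_inj[of N "\<lambda>i j. phi j (p i)", OF Minj])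
    show ?thesis
    proof
      fix s assume s: "s \<in> {1..N}"
      have sk: "s \<in> {1..k+m}" using s N by simp
      have ps: "p s \<noteq> 0" using crit sk by auto
      have D: "cs.D s \<noteq> 0" using cs.D_nz[OF sk] .
      have WS: "W s * (\<Sum>i=1..N. I i * phi i (p s)) = \<beta> s" using y0 s by (simp add: y_def)
      have pm: "p s ^ m = p s ^ (m - 1) * p s"
        using m1 by (simp add: power_Suc2[symmetric])
      have P: "p s ^ (m - 1) \<noteq> 0" using ps by simp
      have E: "of_nat k * cs.D s \<noteq> 0" using D k1 by simp
      have Wnz: "W s \<noteq> 0" using P E by (simp add: W_def)
      have aux: "\<And>P E q a :: complex. P \<noteq> 0 \<Longrightarrow> E \<noteq> 0 \<Longrightarrow> (P * q / (E * a)) / (P / E) = q / a"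
        by (case_tac "a = 0") (simp_all add: field_simps)
      have "(\<Sum>i=1..N. I i * phi i (p s)) = \<beta> s / W s"
        using WS Wnz by (simp add: eq_divide_eq mult.commute)
      also have "\<dots> = p s / (x0 - p s)"
        unfolding W_def \<beta>_def pm using aux[OF P E] by simp
      finally show "(\<Sum>i=1..N. I i * phi i (p s)) = p s / (x0 - p s)" .
    qed
  qed
  have pair: "(\<Sum>i=1..N. \<Sum>j=1..N. I i * J j * eta F tau0 i j)
      = (\<Sum>s=1..k+m. p s ^ (m + 1) / (of_nat k * cs.D s * (x1 - p s) * (x2 - p s)))"
    if hI: "\<forall>s\<in>{1..N}. (\<Sum>i=1..N. I i * phi i (p s)) = p s / (x1 - p s)"
      and hJ: "\<forall>s\<in>{1..N}. (\<Sum>i=1..N. J i * phi i (p s)) = p s / (x2 - p s)"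
      and x1: "x1 \<notin> cs.SS" and x2: "x2 \<notin> cs.SS"
    for I J x1 x2
  proof -
    have "(\<Sum>i=1..N. \<Sum>j=1..N. I i * J j * eta F tau0 i j)
        = (\<Sum>i=1..N. \<Sum>j=1..N. I i * J j * (\<Sum>s=1..N. phi i (p s) * phi j (p s) * W s))"
      using eta_eq by (intro sum.cong refl) simp
    also have "\<dots> = (\<Sum>s=1..N. W s * (\<Sum>i=1..N. I i * phi i (p s)) * (\<Sum>j=1..N. J j * phi j (p s)))"
      by (rule triple_swap)
    also have "\<dots> = (\<Sum>s=1..N. W s * (p s / (x1 - p s)) * (p s / (x2 - p s)))"
      using hI hJ by (intro sum.cong refl) simp
    also have "\<dots> = (\<Sum>s=1..k+m. p s ^ (m + 1) / (of_nat k * cs.D s * (x1 - p s) * (x2 - p s)))"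
      unfolding N
    proof (rule sum.cong[OF refl])
      fix s assume s: "s \<in> {1..k+m}"
      have pp: "p s ^ (m + 1) = p s ^ (m - 1) * p s * p s"
      proof -
        have "p s ^ (m - 1) * p s * p s = p s ^ (Suc (Suc (m - 1)))" by (simp add: mult_ac)
        moreover have "Suc (Suc (m - 1)) = m + 1" using m1 by simp
        ultimately show ?thesis by metis
      qed
      show "W s * (p s / (x1 - p s)) * (p s / (x2 - p s)) = p s ^ (m + 1) / (of_nat k * cs.D s * (x1 - p s) * (x2 - p s))"
        by (simp only: W_def times_divide_times_eq pp)
    qed
    finally show ?thesis .
  qed
  have ca: "xa tau0 lam0 \<notin> cs.SS
      \<and> (xa tau0 has_field_derivative 1 / fLx k m Q t0 (xa tau0 lam0)) (at lam0)
      \<and> (\<forall>j\<in>{1..N}. - pd j (\<lambda>z. xa z lam0) tau0 / xa tau0 lam0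
            = phi j (xa tau0 lam0) / (xa tau0 lam0 * fLx k m Q t0 (xa tau0 lam0)))
      \<and> (\<exists>rho>0. \<forall>l\<in>ball lam0 rho. xa tau0 l \<noteq> 0)" by (rule cyc[OF xa])
  have cb: "xb tau0 lam0 \<notin> cs.SS
      \<and> (xb tau0 has_field_derivative 1 / fLx k m Q t0 (xb tau0 lam0)) (at lam0)
      \<and> (\<forall>j\<in>{1..N}. - pd j (\<lambda>z. xb z lam0) tau0 / xb tau0 lam0
            = phi j (xb tau0 lam0) / (xb tau0 lam0 * fLx k m Q t0 (xb tau0 lam0)))" using cyc[OF xb] by blast
  define x1 where "x1 = xa tau0 lam0"
  define x2 where "x2 = xb tau0 lam0"
  have x1S: "x1 \<notin> cs.SS" using ca by (simp add: x1_def)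
  have x2S: "x2 \<notin> cs.SS" using cb by (simp add: x2_def)
  have Ia': "\<forall>j\<in>{1..N}. (\<Sum>i=1..N. Ia i * eta F tau0 i j) = phi j x1 / (x1 * fLx k m Q t0 x1)"
    using Ia ca by (simp add: x1_def)
  have Ib': "\<forall>j\<in>{1..N}. (\<Sum>i=1..N. Ib i * eta F tau0 i j) = phi j x2 / (x2 * fLx k m Q t0 x2)"
    using Ib cb by (simp add: x2_def)
  have hA: "\<forall>s\<in>{1..N}. (\<Sum>i=1..N. Ia i * phi i (p s)) = p s / (x1 - p s)" by (rule Idet[OF x1S Ia'])
  have hB: "\<forall>s\<in>{1..N}. (\<Sum>i=1..N. Ib i * phi i (p s)) = p s / (x2 - p s)" by (rule Idet[OF x2S Ib'])
  have da: "deriv (xa tau0) lam0 = 1 / fLx k m Q t0 x1" using ca DERIV_imp_deriv by (auto simp: x1_def)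
  have db: "deriv (xb tau0) lam0 = 1 / fLx k m Q t0 x2" using cb DERIV_imp_deriv by (auto simp: x2_def)
  have part1: "x1 \<noteq> x2 \<longrightarrow> (\<Sum>i = 1..N. \<Sum>j = 1..N. Ia i * Ib j * eta F tau0 i j)
              = - (deriv (xa tau0) lam0 - deriv (xb tau0) lam0) / (x1 - x2)"
    using pair[OF hA hB x1S x2S] cs.pair_ab[OF x1S x2S] da db by simp
  have part2: "(\<Sum>i = 1..N. \<Sum>j = 1..N. Ia i * Ia j * eta F tau0 i j)
              = deriv (\<lambda>l. deriv (F tau0) (xa tau0 l)) lam0 / deriv (F tau0) x1"
  proof -
    have x10: "x1 \<noteq> 0" using x1S by auto
    have fnz: "fLx k m Q t0 x1 \<noteq> 0" using cs.fLx_nz[OF x1S] .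
    obtain rho where rho: "rho > 0" "\<forall>l\<in>ball lam0 rho. xa tau0 l \<noteq> 0" using ca by blast
    have fd: "fLx k m Q t0 field_differentiable at x1"
      by (rule holomorphic_on_imp_differentiable_at[OF fLx_holo]) (use x10 in auto)
    then have df: "(fLx k m Q t0 has_field_derivative deriv (fLx k m Q t0) x1) (at x1)"
      by (simp add: DERIV_deriv_iff_field_differentiable)
    have dxa: "(xa tau0 has_field_derivative 1 / fLx k m Q t0 x1) (at lam0)" using ca by (simp add: x1_def)
    have "((\<lambda>l. fLx k m Q t0 (xa tau0 l)) has_field_derivative deriv (fLx k m Q t0) x1 * (1 / fLx k m Q t0 x1)) (at lam0)"
      using DERIV_chain2[OF df[unfolded x1_def] dxa[unfolded x1_def]] by (simp add: x1_def)
    then have dcomp2: "((\<lambda>l. deriv (F tau0) (xa tau0 l)) has_field_derivative deriv (fLx k m Q t0) x1 * (1 / fLx k m Q t0 x1)) (at lam0)"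
    proof (rule has_field_derivative_transform_within_open[OF _ open_ball])
      show "lam0 \<in> ball lam0 rho" using rho by simp
      fix l assume "l \<in> ball lam0 rho"
      then show "fLx k m Q t0 (xa tau0 l) = deriv (F tau0) (xa tau0 l)" using rho dF' by auto
    qed
    have "deriv (\<lambda>l. deriv (F tau0) (xa tau0 l)) lam0 / deriv (F tau0) x1
        = deriv (fLx k m Q t0) x1 / (fLx k m Q t0 x1) ^ 2"
    proof -
      have dd: "deriv (\<lambda>l. deriv (F tau0) (xa tau0 l)) lam0 = deriv (fLx k m Q t0) x1 * (1 / fLx k m Q t0 x1)"
        using DERIV_imp_deriv[OF dcomp2] .
      show ?thesis unfolding dd dF'[OF x10] by (simp add: power2_eq_square divide_divide_eq_left)
    qed
    also have "\<dots> = (\<Sum>s=1..k+m. p s ^ (m + 1) / (of_nat k * cs.D s * (x1 - p s) ^ 2))"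
      by (rule cs.pair_aa[OF x1S, symmetric])
    also have "\<dots> = (\<Sum>s=1..k+m. p s ^ (m + 1) / (of_nat k * cs.D s * (x1 - p s) * (x1 - p s)))"
      by (simp add: power2_eq_square mult.assoc)
    also have "\<dots> = (\<Sum>i = 1..N. \<Sum>j = 1..N. Ia i * Ia j * eta F tau0 i j)"
      by (rule pair[OF hA hA x1S x1S, symmetric])
    finally show ?thesis by simp
  qed
  show ?thesis using part1 part2 by (simp add: x1_def x2_def)
qed

end
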